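(* Let $\Phi$ be a (Bourbaki) root system, $D$ a set of simple roots, $\Phi^+$ the positive roots with respect to $D$, $J\subseteq D$, and $\pi_J\colon\mathbb Z\Phi\to\mathbb Z\Phi/\mathbb Z(D\setminus J)$ the natural projection. Let $\alpha\in\pi_J(\Phi^+)\setminus\{0\}$ be such that $\alpha\neq m\alpha_0$ for every integer $m\ge1$ and every $\alpha_0\in\pi_J(D)\setminus\{0\}$. Then there exist non-collinear $\beta\in\pi_J(\Phi^+)\setminus\{0\}$ and $\gamma\in\pi_J(J)$ with $\alpha=\beta+\gamma$. *)

theory Defs
  imports "HOL-Analysis.Analysis"
begin

definition root_system :: "'a::euclidean_space set \<Rightarrow> bool" where
  "root_system R \<longleftrightarrow> finite R \<and> 0 \<notin> R \<and> span R = UNIV \<and>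
     (\<forall>a\<in>R. \<forall>b\<in>R. b - (2 * (b \<bullet> a) / (a \<bullet> a)) *\<^sub>R a \<in> R \<and>
                      2 * (b \<bullet> a) / (a \<bullet> a) \<in> \<int>)"

definition zspan :: "'a::real_vector set \<Rightarrow> 'a set" where
  "zspan S = {x. \<exists>F c. finite F \<and> F \<subseteq> S \<and> x = (\<Sum>v\<in>F. of_int (c v :: int) *\<^sub>R v)}"

definition is_base :: "'a::euclidean_space set \<Rightarrow> 'a set \<Rightarrow> bool" where
  "is_base R D \<longleftrightarrow> D \<subseteq> R \<and> independent D \<and> span D = UNIV \<and>
     (\<forall>b\<in>R. \<exists>c::'a \<Rightarrow> int. b = (\<Sum>d\<in>D. of_int (c d) *\<^sub>R d) \<and>
                  ((\<forall>d\<in>D. c d \<ge> 0) \<or> (\<forall>d\<in>D. c d \<le> 0)))"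

definition pos_roots :: "'a::euclidean_space set \<Rightarrow> 'a set \<Rightarrow> 'a set" where
  "pos_roots R D = {b\<in>R. \<exists>c::'a \<Rightarrow> int. b = (\<Sum>d\<in>D. of_int (c d) *\<^sub>R d) \<and> (\<forall>d\<in>D. c d \<ge> 0)}"

text \<open>Natural projection Z R -> Z R / Z(D - J), elements of the quotient being cosets
  x + Z(D - J).\<close>
definition projJ :: "'a::euclidean_space set \<Rightarrow> 'a set \<Rightarrow> 'a \<Rightarrow> 'a set" where
  "projJ D J x = (\<lambda>l. x + l) ` zspan (D - J)"

end

theory Submission imports Defs begin

lemma E_uniq:
  fixes D :: "'a::euclidean_space set"
  assumes "finite D" "independent D"
    and "(\<Sum>v\<in>D. of_int (c v) *\<^sub>R v) = (\<Sum>v\<in>D. of_int (c' v) *\<^sub>R v)" "w \<in> D"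
  shows "c w = c' w"
proof (rule ccontr)
  assume ne: "c w \<noteq> c' w"
  let ?u = "\<lambda>v. (of_int (c v) - of_int (c' v) :: real)"
  have "(\<Sum>v\<in>D. ?u v *\<^sub>R v) = 0"
    using assms(3) by (simp only: scaleR_diff_left sum_subtractf) simp
  moreover have "\<exists>v\<in>D. ?u v \<noteq> 0" using ne assms(4) by auto
  ultimately have "dependent D" unfolding dependent_finite[OF assms(1)] by (intro exI[of _ ?u] conjI)
  thus False using assms(2) by simp
qed

lemma zspan_fin:
  fixes S :: "'a::real_vector set"
  assumes "finite S"
  shows "x \<in> zspan S \<longleftrightarrow> (\<exists>c. x = (\<Sum>v\<in>S. of_int (c v :: int) *\<^sub>R v))"
proof
  assume "x \<in> zspan S"
  then obtain F c where F: "finite F" "F \<subseteq> S" "x = (\<Sum>v\<in>F. of_int (c v :: int) *\<^sub>R v)"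
    unfolding zspan_def by blast
  have "(\<Sum>v\<in>S. of_int (if v \<in> F then c v else 0) *\<^sub>R v) = (\<Sum>v\<in>S. if v \<in> F then of_int (c v) *\<^sub>R v else 0)"
    by (rule sum.cong) auto
  also have "\<dots> = (\<Sum>v\<in>S \<inter> F. of_int (c v) *\<^sub>R v)"
    using assms by (rule sum.inter_restrict[symmetric])
  also have "S \<inter> F = F" using F by blast
  finally have "x = (\<Sum>v\<in>S. of_int (if v \<in> F then c v else 0) *\<^sub>R v)" using F(3) by simp
  thus "\<exists>c. x = (\<Sum>v\<in>S. of_int (c v :: int) *\<^sub>R v)" by (rule exI[where x="\<lambda>v. if v \<in> F then c v else 0"])
next
  assume "\<exists>c. x = (\<Sum>v\<in>S. of_int (c v :: int) *\<^sub>R v)"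
  thus "x \<in> zspan S" using assms unfolding zspan_def by blast
qed

lemma zspan_add:
  fixes S :: "'a::real_vector set"
  assumes "finite S" "x \<in> zspan S" "y \<in> zspan S"
  shows "x + y \<in> zspan S"
proof -
  obtain c1 where "x = (\<Sum>v\<in>S. of_int (c1 v :: int) *\<^sub>R v)"
    using assms(2) unfolding zspan_fin[OF assms(1)] by blast
  moreover obtain c2 where "y = (\<Sum>v\<in>S. of_int (c2 v :: int) *\<^sub>R v)"
    using assms(3) unfolding zspan_fin[OF assms(1)] by blast
  ultimately have "x + y = (\<Sum>v\<in>S. of_int (c1 v + c2 v) *\<^sub>R v)"
    by (simp add: scaleR_add_left sum.distrib)
  thus ?thesis unfolding zspan_fin[OF assms(1)] by (rule exI[where x="\<lambda>v. c1 v + c2 v"])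
qed

lemma zspan_neg:
  fixes S :: "'a::real_vector set"
  assumes "finite S" "x \<in> zspan S"
  shows "- x \<in> zspan S"
proof -
  obtain c1 where "x = (\<Sum>v\<in>S. of_int (c1 v :: int) *\<^sub>R v)"
    using assms(2) unfolding zspan_fin[OF assms(1)] by blast
  hence "- x = (\<Sum>v\<in>S. of_int (- c1 v) *\<^sub>R v)"
    by (simp add: sum_negf)
  thus ?thesis unfolding zspan_fin[OF assms(1)] by (rule exI[where x="\<lambda>v. - c1 v"])
qed

lemma zspan_0:
  fixes S :: "'a::real_vector set"
  assumes "finite S" shows "0 \<in> zspan S"
  unfolding zspan_def by (rule CollectI, rule exI[of _ "{}"]) auto

lemma projJ_eq:
  fixes D J :: "'a::euclidean_space set"
  assumes "finite D"
  shows "projJ D J x = projJ D J y \<longleftrightarrow> x - y \<in> zspan (D - J)"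
proof -
  have f: "finite (D - J)" using assms by simp
  show ?thesis
  proof
    assume "projJ D J x = projJ D J y"
    hence "x + 0 \<in> (\<lambda>l. y + l) ` zspan (D - J)"
      unfolding projJ_def using zspan_0[OF f] by (metis image_eqI)
    then obtain l where "l \<in> zspan (D - J)" "x = y + l" by auto
    thus "x - y \<in> zspan (D - J)" by simp
  next
    assume h: "x - y \<in> zspan (D - J)"
    have "(\<lambda>l. x + l) ` zspan (D - J) \<subseteq> (\<lambda>l. y + l) ` zspan (D - J)"
    proof
      fix z assume "z \<in> (\<lambda>l. x + l) ` zspan (D - J)"
      then obtain l where l: "l \<in> zspan (D - J)" "z = x + l" by auto
      have "(x - y) + l \<in> zspan (D - J)" using zspan_add[OF f h l(1)] .
      moreover have "z = y + ((x - y) + l)" using l by simp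
      ultimately show "z \<in> (\<lambda>l. y + l) ` zspan (D - J)" by blast
    qed
    moreover have "(\<lambda>l. y + l) ` zspan (D - J) \<subseteq> (\<lambda>l. x + l) ` zspan (D - J)"
    proof
      fix z assume "z \<in> (\<lambda>l. y + l) ` zspan (D - J)"
      then obtain l where l: "l \<in> zspan (D - J)" "z = y + l" by auto
      have "-(x - y) + l \<in> zspan (D - J)" using zspan_add[OF f zspan_neg[OF f h] l(1)] .
      moreover have "z = x + (-(x - y) + l)" using l by simp
      ultimately show "z \<in> (\<lambda>l. x + l) ` zspan (D - J)" by blast
    qed
    ultimately show "projJ D J x = projJ D J y" unfolding projJ_def by blast
  qed
qed

lemma L_Z:
  fixes D J :: "'a::euclidean_space set"
  assumes "finite D" "independent D" "J \<subseteq> D"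
  shows "(\<Sum>v\<in>D. of_int (c v) *\<^sub>R v) \<in> zspan (D - J) \<longleftrightarrow> (\<forall>e\<in>J. c e = 0)"
proof
  assume "(\<Sum>v\<in>D. of_int (c v) *\<^sub>R v) \<in> zspan (D - J)"
  then obtain c' where c': "(\<Sum>v\<in>D. of_int (c v) *\<^sub>R v) = (\<Sum>v\<in>D - J. of_int (c' v :: int) *\<^sub>R v)"
    unfolding zspan_fin[OF finite_Diff[OF assms(1)]] by blast
  have "(\<Sum>v\<in>D. of_int (if v \<in> D - J then c' v else 0) *\<^sub>R v) = (\<Sum>v\<in>D. if v \<in> D - J then of_int (c' v) *\<^sub>R v else 0)"
    by (rule sum.cong) auto
  also have "\<dots> = (\<Sum>v\<in>D \<inter> (D - J). of_int (c' v) *\<^sub>R v)"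
    using assms by (intro sum.inter_restrict[symmetric]) auto
  also have "D \<inter> (D - J) = D - J" by blast
  finally have "(\<Sum>v\<in>D. of_int (c v) *\<^sub>R v) = (\<Sum>v\<in>D. of_int (if v \<in> D - J then c' v else 0) *\<^sub>R v)"
    using c' by simp
  from E_uniq[OF assms(1,2) this] assms(3) show "\<forall>e\<in>J. c e = 0" by auto
next
  assume h: "\<forall>e\<in>J. c e = 0"
  have "(\<Sum>v\<in>D. of_int (c v) *\<^sub>R v) = (\<Sum>v\<in>D - J. of_int (c v) *\<^sub>R v) + (\<Sum>v\<in>J. of_int (c v) *\<^sub>R v)"
    using assms by (intro sum.subset_diff) auto
  also have "(\<Sum>v\<in>J. of_int (c v) *\<^sub>R v) = 0" using h by simp
  finally have "(\<Sum>v\<in>D. of_int (c v) *\<^sub>R v) = (\<Sum>v\<in>D - J. of_int (c v) *\<^sub>R v)" by simp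
  thus "(\<Sum>v\<in>D. of_int (c v) *\<^sub>R v) \<in> zspan (D - J)"
    unfolding zspan_fin[OF finite_Diff[OF assms(1)]] by (rule exI[where x=c])
qed

lemma root_diff:
  fixes R :: "'a::euclidean_space set"
  assumes rs: "root_system R" and a: "a \<in> R" and d: "d \<in> R" and pos: "a \<bullet> d > 0" and ne: "a \<noteq> d"
  shows "a - d \<in> R"
proof -
  have refl: "\<And>x y. x \<in> R \<Longrightarrow> y \<in> R \<Longrightarrow> y - (2 * (y \<bullet> x) / (x \<bullet> x)) *\<^sub>R x \<in> R \<and> 2 * (y \<bullet> x) / (x \<bullet> x) \<in> \<int>"
    using rs unfolding root_system_def by blast
  have nz: "\<And>x. x \<in> R \<Longrightarrow> x \<bullet> x > 0" using rs unfolding root_system_def by auto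
  have aa: "a \<bullet> a > 0" and dd: "d \<bullet> d > 0" using nz a d by auto
  obtain n1 where n1: "2 * (a \<bullet> d) / (d \<bullet> d) = of_int n1" using refl[OF d a] Ints_cases by metis
  obtain n2 where n2: "2 * (d \<bullet> a) / (a \<bullet> a) = of_int n2" using refl[OF a d] Ints_cases by metis
  have n1p: "n1 > 0" proof -
    have "(of_int n1::real) > 0" using n1[symmetric] pos dd by simp
    thus ?thesis by simp qed
  have n2p: "n2 > 0" proof -
    have "(of_int n2::real) > 0" using n2[symmetric] pos aa by (simp add: inner_commute)
    thus ?thesis by simp qed
  consider "n1 = 1" | "n2 = 1" | "n1 \<ge> 2 \<and> n2 \<ge> 2" using n1p n2p by linarith
  thus ?thesis
  proof cases
    case 1
    have "a - (2 * (a \<bullet> d) / (d \<bullet> d)) *\<^sub>R d \<in> R" using refl[OF d a] by blast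
    thus ?thesis using n1 1 by simp
  next
    case 2
    have x: "d - a \<in> R" using refl[OF a d] n2 2 by simp
    have "(d - a) - (2 * ((d - a) \<bullet> (d - a)) / ((d - a) \<bullet> (d - a))) *\<^sub>R (d - a) \<in> R" using refl[OF x x] by blast
    moreover have "(d - a) \<bullet> (d - a) > 0" using nz[OF x] .
    ultimately have "(d - a) - 2 *\<^sub>R (d - a) \<in> R" by simp
    moreover have "(d - a) - 2 *\<^sub>R (d - a) = a - d" by (simp add: algebra_simps scaleR_2)
    ultimately show ?thesis by simp
  next
    case 3
    define t where "t = (a \<bullet> d) / (d \<bullet> d)"
    have te: "t = of_int n1 / 2" using n1 unfolding t_def by (simp add: field_simps)
    have t1: "t \<ge> 1" using te 3 by simp
    have n2e: "2 * (d \<bullet> a) = of_int n2 * (a \<bullet> a)" using n2 aa by (simp add: field_simps)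
    have "of_int n2 * (a \<bullet> a) \<ge> 2 * (a \<bullet> a)" using 3 aa by (intro mult_right_mono) auto
    hence t2: "2 * (d \<bullet> a) \<ge> 2 * (a \<bullet> a)" using n2e by simp
    have "(a - t *\<^sub>R d) \<bullet> (a - t *\<^sub>R d) = a \<bullet> a - 2 * t * (a \<bullet> d) + t * t * (d \<bullet> d)"
      by (simp add: inner_diff_left inner_diff_right inner_commute algebra_simps)
    also have "\<dots> = a \<bullet> a - t * (a \<bullet> d)" using dd unfolding t_def by (simp add: field_simps)
    also have "\<dots> \<le> 0"
    proof -
      have "t * (a \<bullet> d) \<ge> 1 * (a \<bullet> d)" using t1 pos by (intro mult_right_mono) auto
      thus ?thesis using t2 by (simp add: inner_commute)
    qed
    finally have "(a - t *\<^sub>R d) \<bullet> (a - t *\<^sub>R d) = 0" using inner_ge_zero[of "a - t *\<^sub>R d"] by linarith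
    hence at: "a = t *\<^sub>R d" by simp
    have da: "d \<bullet> a = t * (d \<bullet> d)" using at by simp
    have aa2: "a \<bullet> a = t * (t * (d \<bullet> d))" using at by simp
    have "t * (t * (d \<bullet> d)) \<le> 1 * (t * (d \<bullet> d))" using t2 da aa2 by simp
    hence "t \<le> 1" using dd t1 by (simp add: mult_le_cancel_right)
    hence "t = 1" using t1 by simp
    thus ?thesis using at ne by simp
  qed
qed


lemma E_delta:
  fixes D :: "'a::real_vector set"
  assumes "finite D" "d \<in> D"
  shows "(\<Sum>v\<in>D. of_int (if v = d then k else 0) *\<^sub>R v) = of_int k *\<^sub>R d"
proof -
  have "(\<Sum>v\<in>D. of_int (if v = d then k else 0) *\<^sub>R v) = (\<Sum>v\<in>D. if v = d then of_int k *\<^sub>R v else 0)"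
    by (rule sum.cong) auto
  also have "\<dots> = of_int k *\<^sub>R d" using assms by (simp add: sum.delta)
  finally show ?thesis .
qed

theorem lemma4p3:
  fixes R D J :: "'a::euclidean_space set" and b :: 'a
  assumes "root_system R"
    and "is_base R D"
    and "J \<subseteq> D"
    and "b \<in> pos_roots R D"
    and "projJ D J b \<noteq> projJ D J 0"
    and "\<forall>d\<in>D. projJ D J d \<noteq> projJ D J 0 \<longrightarrow>
            (\<forall>m::nat. m \<ge> 1 \<longrightarrow> projJ D J b \<noteq> projJ D J (of_nat m *\<^sub>R d))"
  shows "\<exists>b'\<in>pos_roots R D. \<exists>j\<in>J.
           projJ D J b' \<noteq> projJ D J 0 \<and>
           projJ D J b = projJ D J (b' + j) \<and>
           \<not> (\<exists>p q :: int. (p, q) \<noteq> (0, 0) \<and>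
                projJ D J (of_int p *\<^sub>R b' + of_int q *\<^sub>R j) = projJ D J 0)"
proof -
  have DR: "D \<subseteq> R" and indD: "independent D"
    and baseprop: "\<forall>b\<in>R. \<exists>c::'a \<Rightarrow> int. b = (\<Sum>d\<in>D. of_int (c d) *\<^sub>R d) \<and>
                  ((\<forall>d\<in>D. c d \<ge> 0) \<or> (\<forall>d\<in>D. c d \<le> 0))"
    using assms(2) unfolding is_base_def by auto
  have finR: "finite R" and R0: "0 \<notin> R" using assms(1) unfolding root_system_def by auto
  have finD: "finite D" using finR DR finite_subset by auto
  have JD: "J \<subseteq> D" by (rule assms(3))
  define E where "E = (\<lambda>c::'a\<Rightarrow>int. \<Sum>v\<in>D. of_int (c v) *\<^sub>R v)"
  define Z where "Z = zspan (D - J)"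
  define \<delta> where "\<delta> = (\<lambda>(d::'a) v. if v = d then (1::int) else 0)"
  have PJ: "\<And>x y. projJ D J x = projJ D J y \<longleftrightarrow> x - y \<in> Z"
    unfolding Z_def using projJ_eq[OF finD] by blast
  have LZ: "\<And>c. E c \<in> Z \<longleftrightarrow> (\<forall>e\<in>J. c e = 0)"
    unfolding Z_def E_def using L_Z[OF finD indD JD] by blast
  have EU: "\<And>c c' w. E c = E c' \<Longrightarrow> w \<in> D \<Longrightarrow> c w = c' w"
    unfolding E_def using E_uniq[OF finD indD] by blast
  have Ediff: "\<And>c c'. E c - E c' = E (\<lambda>v. c v - c' v)"
    unfolding E_def by (simp add: scaleR_diff_left sum_subtractf)
  have Eadd: "\<And>c c'. E c + E c' = E (\<lambda>v. c v + c' v)"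
    unfolding E_def by (simp add: scaleR_add_left sum.distrib)
  have Esc: "\<And>p c. of_int p *\<^sub>R E c = E (\<lambda>v. p * c v)"
    unfolding E_def by (simp add: scaleR_sum_right)
  have Edelta: "\<And>d. d \<in> D \<Longrightarrow> E (\<delta> d) = d"
  proof -
    fix d assume dD: "d \<in> D"
    show "E (\<delta> d) = d" unfolding E_def \<delta>_def using E_delta[OF finD dD, of 1] by simp
  qed
  have Z0: "0 \<in> Z" unfolding Z_def using zspan_0 finD by blast
  have posI: "\<And>x c. x \<in> R \<Longrightarrow> x = E c \<Longrightarrow> (\<forall>d\<in>D. c d \<ge> 0) \<Longrightarrow> x \<in> pos_roots R D"
    unfolding pos_roots_def E_def by blast
  have posE: "\<And>x. x \<in> pos_roots R D \<Longrightarrow> x \<in> R \<and> (\<exists>c. x = E c \<and> (\<forall>d\<in>D. c d \<ge> 0))"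
    unfolding pos_roots_def E_def by blast
  obtain cb where cb: "b = E cb" using posE[OF assms(4)] by blast
  have H5: "\<not> (\<forall>e\<in>J. cb e = 0)"
    using assms(5) PJ[of b 0] LZ[of cb] cb by simp
  have H6: "\<not> (\<forall>e\<in>J. cb e = (if e = d then m else 0))" if dJ: "d \<in> J" and m: "m \<ge> 1" for d m
  proof
    assume A: "\<forall>e\<in>J. cb e = (if e = d then m else 0)"
    have dD: "d \<in> D" using dJ JD by blast
    have "\<not> (\<forall>e\<in>J. \<delta> d e = 0)" using dJ unfolding \<delta>_def by auto
    hence "d - 0 \<notin> Z" using LZ[of "\<delta> d"] Edelta[OF dD] by simp
    hence "projJ D J d \<noteq> projJ D J 0" using PJ by blast
    hence inst: "\<forall>m'::nat. m' \<ge> 1 \<longrightarrow> projJ D J b \<noteq> projJ D J (of_nat m' *\<^sub>R d)" using assms(6) dD by blast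
    have "projJ D J b \<noteq> projJ D J (of_int m *\<^sub>R d)" using inst[rule_format, of "nat m"] m by simp
    hence "b - of_int m *\<^sub>R d \<notin> Z" using PJ by simp
    moreover have "b - of_int m *\<^sub>R d = E cb - of_int m *\<^sub>R E (\<delta> d)"
      using cb Edelta[OF dD] by simp
    moreover have "E cb - of_int m *\<^sub>R E (\<delta> d) = E (\<lambda>v. cb v - m * \<delta> d v)"
      by (simp only: Esc Ediff)
    ultimately have "E (\<lambda>v. cb v - m * \<delta> d v) \<notin> Z" by simp
    hence "\<not> (\<forall>e\<in>J. cb e - m * \<delta> d e = 0)" using LZ[of "\<lambda>v. cb v - m * \<delta> d v"] by simp
    thus False using A unfolding \<delta>_def by (auto split: if_splits)
  qed
  define T where "T = {x \<in> pos_roots R D. b - x \<in> Z}"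
  have finT: "finite T" by (rule finite_subset[OF _ finR]) (auto simp: T_def pos_roots_def)
  have bT: "b \<in> T" unfolding T_def using assms(4) Z0 by simp
  obtain g where g: "linear g" "\<forall>x\<in>D. g x = (1::real)"
    using linear_independent_extend[OF indD, of "\<lambda>_. 1"] by blast
  define mn where "mn = Min (g ` T)"
  have "mn \<in> g ` T" unfolding mn_def using finT bT by (intro Min_in) auto
  then obtain b0 where b0T: "b0 \<in> T" and gb0: "g b0 = mn" by blast
  have b0min: "g b0 \<le> g x" if "x \<in> T" for x
    unfolding gb0 mn_def using finT that by (intro Min_le) auto
  have b0pos: "b0 \<in> pos_roots R D" and bb0: "b - b0 \<in> Z" using b0T unfolding T_def by auto
  obtain c0 where b0R: "b0 \<in> R" and c0: "b0 = E c0" and c0pos: "\<forall>d\<in>D. c0 d \<ge> 0"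
    using posE[OF b0pos] by blast
  have cbc0: "\<forall>e\<in>J. cb e = c0 e"
  proof -
    have "E (\<lambda>v. cb v - c0 v) \<in> Z" using bb0 unfolding cb c0 Ediff .
    hence "\<forall>e\<in>J. cb e - c0 e = 0" using LZ[of "\<lambda>v. cb v - c0 v"] by simp
    thus ?thesis by simp
  qed
  have H5': "\<not> (\<forall>e\<in>J. c0 e = 0)" using H5 cbc0 by simp
  have H6': "\<not> (\<forall>e\<in>J. c0 e = (if e = d then m else 0))" if "d \<in> J" "m \<ge> 1" for d m
  proof
    assume "\<forall>e\<in>J. c0 e = (if e = d then m else 0)"
    hence "\<forall>e\<in>J. cb e = (if e = d then m else 0)" using cbc0 by simp
    thus False using H6[OF that] by blast
  qed
  have single: "False" if "d \<in> D" "\<forall>e\<in>J. e \<noteq> d \<longrightarrow> c0 e = 0" "c0 d \<ge> 1" for d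
  proof (cases "d \<in> J")
    case True
    have "\<forall>e\<in>J. c0 e = (if e = d then c0 d else 0)" using that by auto
    thus False using H6'[OF True that(3)] by blast
  next
    case False
    hence "\<forall>e\<in>J. c0 e = 0" using that by auto
    thus False using H5' by blast
  qed
  have "b0 \<noteq> 0" using b0R R0 by blast
  hence "b0 \<bullet> b0 > 0" by simp
  moreover have "b0 \<bullet> b0 = (\<Sum>v\<in>D. of_int (c0 v) * (b0 \<bullet> v))"
    by (subst (2) c0) (simp add: E_def inner_sum_right)
  ultimately have "\<exists>d\<in>D. of_int (c0 d) * (b0 \<bullet> d) > 0"
  proof -
    assume s1: "b0 \<bullet> b0 > 0" and s2: "b0 \<bullet> b0 = (\<Sum>v\<in>D. of_int (c0 v) * (b0 \<bullet> v))"
    show ?thesis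
    proof (rule ccontr)
      assume "\<not> (\<exists>d\<in>D. of_int (c0 d) * (b0 \<bullet> d) > 0)"
      hence "\<forall>d\<in>D. of_int (c0 d) * (b0 \<bullet> d) \<le> 0" by (simp add: not_less)
      hence "(\<Sum>v\<in>D. of_int (c0 v) * (b0 \<bullet> v)) \<le> 0" by (intro sum_nonpos) simp
      thus False using s1 s2 by linarith
    qed
  qed
  then obtain d where dD: "d \<in> D" and dpos: "of_int (c0 d) * (b0 \<bullet> d) > 0" by blast
  have c0d: "c0 d \<ge> 1" and b0d: "b0 \<bullet> d > 0"
    using dpos c0pos dD by (auto simp: zero_less_mult_iff)
  have "b0 \<noteq> d"
  proof
    assume "b0 = d"
    hence "E c0 = E (\<delta> d)" using c0 Edelta[OF dD] by simp
    hence "\<forall>e\<in>D. c0 e = \<delta> d e" using EU[of c0 "\<delta> d"] by blast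
    hence c0e: "\<forall>e\<in>D. c0 e = (if e = d then 1 else 0)" unfolding \<delta>_def by simp
    have A1: "\<forall>e\<in>J. e \<noteq> d \<longrightarrow> c0 e = 0" using c0e JD by auto
    have A2: "c0 d \<ge> 1" using c0e dD by simp
    show False by (rule single[OF dD A1 A2])
  qed
  hence b'R: "b0 - d \<in> R" using root_diff[OF assms(1) b0R _ b0d] DR dD by blast
  obtain c' where c': "b0 - d = E c'" and sgn: "(\<forall>d\<in>D. c' d \<ge> 0) \<or> (\<forall>d\<in>D. c' d \<le> 0)"
    using bspec[OF baseprop b'R] unfolding E_def by blast
  have "b0 - d = E c0 - E (\<delta> d)" using c0 Edelta[OF dD] by simp
  also have "\<dots> = E (\<lambda>v. c0 v - \<delta> d v)" by (simp only: Ediff)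
  finally have "E c' = E (\<lambda>v. c0 v - \<delta> d v)" using c' by simp
  hence c'e: "\<And>e. e \<in> D \<Longrightarrow> c' e = c0 e - \<delta> d e" using EU[of c' "\<lambda>v. c0 v - \<delta> d v"] by blast
  have c'pos: "\<forall>e\<in>D. c' e \<ge> 0"
  proof (rule ccontr)
    assume "\<not> (\<forall>e\<in>D. c' e \<ge> 0)"
    hence neg: "\<forall>e\<in>D. c' e \<le> 0" using sgn by blast
    have "\<forall>e\<in>J. e \<noteq> d \<longrightarrow> c0 e = 0"
    proof (intro ballI impI)
      fix e assume "e \<in> J" "e \<noteq> d"
      hence "e \<in> D" using JD by blast
      have x1: "c' e \<le> 0" using neg \<open>e \<in> D\<close> by blast
      have x2: "c' e = c0 e" using c'e[OF \<open>e \<in> D\<close>] \<open>e \<noteq> d\<close> unfolding \<delta>_def by simp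
      have x3: "c0 e \<ge> 0" using c0pos \<open>e \<in> D\<close> by blast
      show "c0 e = 0" using x1 x2 x3 by linarith
    qed
    thus False using single[OF dD] c0d by blast
  qed
  have b'pos: "b0 - d \<in> pos_roots R D" using posI[OF b'R c'] c'pos by blast
  have dJ: "d \<in> J"
  proof (rule ccontr)
    assume ndJ: "d \<notin> J"
    have "b - (b0 - d) = E (\<lambda>v. cb v - c' v)" unfolding c' by (simp only: cb Ediff)
    moreover have "\<forall>e\<in>J. cb e - c' e = 0"
    proof
      fix e assume eJ: "e \<in> J"
      hence "e \<in> D" "e \<noteq> d" using JD ndJ by auto
      hence y1: "c' e = c0 e" using c'e[of e] unfolding \<delta>_def by simp
      have y2: "cb e = c0 e" using cbc0 eJ by blast
      show "cb e - c' e = 0" using y1 y2 by simp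
    qed
    ultimately have "b - (b0 - d) \<in> Z" using LZ[of "\<lambda>v. cb v - c' v"] by simp
    hence "b0 - d \<in> T" unfolding T_def using b'pos by simp
    hence "g b0 \<le> g (b0 - d)" by (rule b0min)
    moreover have "g (b0 - d) = g b0 - 1" using g dD by (simp add: linear_diff)
    ultimately show False by simp
  qed
  have noncol: "\<not> (\<exists>p q :: int. (p, q) \<noteq> (0, 0) \<and>
                projJ D J (of_int p *\<^sub>R (b0 - d) + of_int q *\<^sub>R d) = projJ D J 0)"
  proof
    assume "\<exists>p q :: int. (p, q) \<noteq> (0, 0) \<and>
                projJ D J (of_int p *\<^sub>R (b0 - d) + of_int q *\<^sub>R d) = projJ D J 0"
    then obtain p q :: int where pq: "(p, q) \<noteq> (0, 0)"
      and eq: "projJ D J (of_int p *\<^sub>R (b0 - d) + of_int q *\<^sub>R d) = projJ D J 0" by blast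
    have "of_int p *\<^sub>R (b0 - d) + of_int q *\<^sub>R d = of_int p *\<^sub>R E c' + of_int q *\<^sub>R E (\<delta> d)"
      by (simp only: c' Edelta[OF dD])
    also have "\<dots> = E (\<lambda>v. p * c' v + q * \<delta> d v)" by (simp only: Esc Eadd)
    finally have ee: "of_int p *\<^sub>R (b0 - d) + of_int q *\<^sub>R d = E (\<lambda>v. p * c' v + q * \<delta> d v)" .
    have "of_int p *\<^sub>R (b0 - d) + of_int q *\<^sub>R d - 0 \<in> Z" using eq unfolding PJ .
    hence "of_int p *\<^sub>R (b0 - d) + of_int q *\<^sub>R d \<in> Z" by simp
    hence "\<forall>e\<in>J. p * c' e + q * \<delta> d e = 0" using LZ[of "\<lambda>v. p * c' v + q * \<delta> d v"] ee by simp
    hence co: "\<And>e. e \<in> J \<Longrightarrow> p * c' e + q * \<delta> d e = 0" by blast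
    show False
    proof (cases "p = 0")
      case True
      hence "q = 0" using co[OF dJ] unfolding \<delta>_def by simp
      thus False using pq True by simp
    next
      case False
      have "\<forall>e\<in>J. e \<noteq> d \<longrightarrow> c0 e = 0"
      proof (intro ballI impI)
        fix e assume eJ: "e \<in> J" and ne: "e \<noteq> d"
        hence "p * c' e = 0" using co[OF eJ] unfolding \<delta>_def by simp
        hence "c' e = 0" using False by simp
        moreover have "e \<in> D" using eJ JD by blast
        ultimately show "c0 e = 0" using c'e[of e] ne unfolding \<delta>_def by simp
      qed
      thus False using single[OF dD] c0d by blast
    qed
  qed
  have nz': "projJ D J (b0 - d) \<noteq> projJ D J 0"
  proof
    assume "projJ D J (b0 - d) = projJ D J 0"
    hence "projJ D J (of_int 1 *\<^sub>R (b0 - d) + of_int 0 *\<^sub>R d) = projJ D J 0" by simp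
    hence "\<exists>p q :: int. (p, q) \<noteq> (0, 0) \<and>
                projJ D J (of_int p *\<^sub>R (b0 - d) + of_int q *\<^sub>R d) = projJ D J 0"
      by (intro exI[of _ 1] exI[of _ 0] conjI) simp_all
    thus False using noncol by (rule notE[rotated])
  qed
  have eqb: "projJ D J b = projJ D J ((b0 - d) + d)" using bb0 unfolding PJ by simp
  have fin: "projJ D J (b0 - d) \<noteq> projJ D J 0 \<and> projJ D J b = projJ D J ((b0 - d) + d) \<and>
     \<not> (\<exists>p q :: int. (p, q) \<noteq> (0, 0) \<and>
                projJ D J (of_int p *\<^sub>R (b0 - d) + of_int q *\<^sub>R d) = projJ D J 0)"
    using nz' eqb noncol by (intro conjI)
  show ?thesis
    by (rule bexI[of _ "b0 - d"], rule bexI[of _ d], rule fin, rule dJ, rule b'pos)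
qed

end
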